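(* Let $m\ge2$ be fixed and assume (A1)–(A4). Let $X_{\mathbf 1}$ be the number of coupons collected by all $m$ collectors. If $\operatorname{Var}(X_{\mathbf 1})$ converges to a finite limit, then $\alpha_1,\alpha_2\in\{0,1\}$. This condition is not sufficient: for $m=2$ and $a_1=a_2=n^{2/3}$ (so $\alpha_1=\alpha_2=0$), $\operatorname{Var}(X_{\mathbf 1})\sim n^{1/3}\to\infty$.
   Context: Coupon collector model: there are $n$ distinct coupons and $m$ collectors acting independently; collector $i$ collects a uniformly random subset of exactly $a_i$ distinct coupons, independently of the others. We consider a sequence of such models indexed by $n$, with $m$ fixed and $a_i=a_i(n)$, under the asymptotic assumptions: (A1) $n\to\infty$; (A2) $a_i\to\infty$ and $n-a_i\to\infty$ for each $i$; (A3) $1\le a_1\le a_2\le\cdots\le a_m\le n-1$; (A4) $a_i/n\to\alpha_i\in[0,1]$ for each $i$. $x_n\sim y_n$ means $x_n/y_n\to1$. *)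

theory Defs
  imports "HOL-Probability.Probability" "HOL-Library.Landau_Symbols"
begin

definition coupon_pmf :: "nat \<Rightarrow> nat \<Rightarrow> (nat \<Rightarrow> nat) \<Rightarrow> (nat \<Rightarrow> nat set) pmf" where
  "coupon_pmf n m a =
     Pi_pmf {1..m} {} (\<lambda>i. pmf_of_set {S. S \<subseteq> {..<n} \<and> card S = a i})"

definition X_all :: "nat \<Rightarrow> (nat \<Rightarrow> nat set) \<Rightarrow> real" where
  "X_all m S = real (card (\<Inter>i\<in>{1..m}. S i))"

definition coupon_var :: "nat \<Rightarrow> nat \<Rightarrow> (nat \<Rightarrow> nat) \<Rightarrow> real" where
  "coupon_var n m a = measure_pmf.variance (coupon_pmf n m a) (X_all m)"

end

theory Submission
  imports Defs "HOL-Real_Asymp.Real_Asymp"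
begin

lemma card_insert_bij:
  assumes "finite A" "j \<in> A" "k > 0"
  shows "card {S. S \<subseteq> A \<and> card S = k \<and> j \<in> S \<and> P S}
       = card {T. T \<subseteq> A - {j} \<and> card T = k - 1 \<and> P (insert j T)}"
proof -
  have "bij_betw (\<lambda>T. insert j T) {T. T \<subseteq> A - {j} \<and> card T = k - 1 \<and> P (insert j T)}
          {S. S \<subseteq> A \<and> card S = k \<and> j \<in> S \<and> P S}"
  proof (rule bij_betw_byWitness[where f'="\<lambda>S. S - {j}"])
    show "\<forall>a\<in>{T. T \<subseteq> A - {j} \<and> card T = k - 1 \<and> P (insert j T)}. insert j a - {j} = a" by auto
    show "\<forall>a'\<in>{S. S \<subseteq> A \<and> card S = k \<and> j \<in> S \<and> P S}. insert j (a' - {j}) = a'" by auto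
    show "insert j ` {T. T \<subseteq> A - {j} \<and> card T = k - 1 \<and> P (insert j T)}
          \<subseteq> {S. S \<subseteq> A \<and> card S = k \<and> j \<in> S \<and> P S}"
    proof safe
      fix T assume T: "T \<subseteq> A - {j}" "card T = k - 1" "P (insert j T)"
      have "finite T" using T assms(1) finite_subset by blast
      moreover have "j \<notin> T" using T by auto
      ultimately show "card (insert j T) = k" using T assms by simp
    qed (use assms in auto)
    show "(\<lambda>S. S - {j}) ` {S. S \<subseteq> A \<and> card S = k \<and> j \<in> S \<and> P S}
          \<subseteq> {T. T \<subseteq> A - {j} \<and> card T = k - 1 \<and> P (insert j T)}"
    proof safe
      fix S assume S: "S \<subseteq> A" "k = card S" "j \<in> S" "P S"
      have "finite S" using S assms(1) finite_subset by blast
      then show "card (S - {j}) = card S - 1" using S by auto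
      show "P (insert j (S - {j}))" using S by (simp add: insert_absorb)
    qed auto
  qed
  then show ?thesis by (simp add: bij_betw_same_card)
qed

lemma count1:
  assumes "finite A" "j \<in> A"
  shows "card {S. S \<subseteq> A \<and> card S = k \<and> j \<in> S}
       = (if k = 0 then 0 else card A - 1 choose (k - 1))"
proof (cases "k = 0")
  case True
  have E: "{S. S \<subseteq> A \<and> card S = k \<and> j \<in> S} = {}"
    using True assms by (auto dest: finite_subset)
  show ?thesis unfolding E using True by simp
next
  case False
  have "card {S. S \<subseteq> A \<and> card S = k \<and> j \<in> S \<and> True}
       = card {T. T \<subseteq> A - {j} \<and> card T = k - 1 \<and> True}"
    by (rule card_insert_bij) (use assms False in auto)
  also have "\<dots> = card (A - {j}) choose (k - 1)" using n_subsets[of "A - {j}" "k - 1"] assms by simp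
  finally show ?thesis using False assms by simp
qed

lemma count2:
  assumes "finite A" "j \<in> A" "l \<in> A" "j \<noteq> l"
  shows "card {S. S \<subseteq> A \<and> card S = k \<and> j \<in> S \<and> l \<in> S}
       = (if k < 2 then 0 else card A - 2 choose (k - 2))"
proof (cases "k = 0")
  case True
  have E: "{S. S \<subseteq> A \<and> card S = k \<and> j \<in> S \<and> l \<in> S} = {}"
    using True assms by (auto dest: finite_subset)
  show ?thesis unfolding E using True by simp
next
  case False
  have "card {S. S \<subseteq> A \<and> card S = k \<and> j \<in> S \<and> l \<in> S}
       = card {T. T \<subseteq> A - {j} \<and> card T = k - 1 \<and> l \<in> insert j T}"
    by (rule card_insert_bij) (use assms False in auto)
  also have "{T. T \<subseteq> A - {j} \<and> card T = k - 1 \<and> l \<in> insert j T}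
           = {T. T \<subseteq> A - {j} \<and> card T = k - 1 \<and> l \<in> T}" using assms by auto
  also have "card \<dots> = (if k - 1 = 0 then 0 else card (A - {j}) - 1 choose (k - 1 - 1))"
    by (rule count1) (use assms in auto)
  finally show ?thesis using False assms by (auto simp: card_Diff_singleton numeral_2_eq_2)
qed

definition KS :: "nat \<Rightarrow> nat \<Rightarrow> nat set set" where
  "KS n k = {S. S \<subseteq> {..<n} \<and> card S = k}"

lemma KS_finite: "finite (KS n k)"
  unfolding KS_def by (rule finite_subset[of _ "Pow {..<n}"]) auto

lemma KS_nonempty: "k \<le> n \<Longrightarrow> KS n k \<noteq> {}"
proof -
  assume "k \<le> n"
  then have "{..<k} \<in> KS n k" unfolding KS_def by auto
  then show ?thesis by auto
qed

lemma card_KS: "card (KS n k) = n choose k"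
  unfolding KS_def using n_subsets[of "{..<n}" k] by simp

lemma exp1:
  assumes "k \<le> n" "j < n"
  shows "measure_pmf.expectation (pmf_of_set (KS n k)) (\<lambda>S. of_bool (j \<in> S))
       = real k / real n"
proof -
  have "measure_pmf.expectation (pmf_of_set (KS n k)) (\<lambda>S. of_bool (j \<in> S))
      = real (card (KS n k \<inter> {S. j \<in> S})) / real (n choose k)"
    using KS_finite KS_nonempty[OF assms(1)] by (simp add: integral_pmf_of_set card_KS)
  also have "KS n k \<inter> {S. j \<in> S} = {S. S \<subseteq> {..<n} \<and> card S = k \<and> j \<in> S}"
    unfolding KS_def by auto
  also have "card \<dots> = (if k = 0 then 0 else n - 1 choose (k - 1))"
    using count1[of "{..<n}" j k] assms by simp
  also have "real (if k = 0 then 0 else n - 1 choose (k - 1)) / real (n choose k) = real k / real n"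
  proof (cases "k = 0")
    case False
    have "k * (n choose k) = n * (n - 1 choose (k - 1))"
      using times_binomial_minus1_eq False by blast
    hence "real k * real (n choose k) = real n * real (n - 1 choose (k - 1))"
      by (metis of_nat_mult)
    moreover have "(n choose k) > 0" using assms by simp
    moreover have "n > 0" using assms by simp
    ultimately show ?thesis using False by (simp add: field_simps)
  qed simp
  finally show ?thesis .
qed

lemma exp2:
  assumes "k \<le> n" "j < n" "l < n" "j \<noteq> l"
  shows "measure_pmf.expectation (pmf_of_set (KS n k)) (\<lambda>S. of_bool (j \<in> S \<and> l \<in> S))
       = real k * (real k - 1) / (real n * (real n - 1))"
proof -
  have "measure_pmf.expectation (pmf_of_set (KS n k)) (\<lambda>S. of_bool (j \<in> S \<and> l \<in> S))
      = real (card (KS n k \<inter> {S. j \<in> S \<and> l \<in> S})) / real (n choose k)"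
    using KS_finite KS_nonempty[OF assms(1)] by (simp add: integral_pmf_of_set card_KS)
  also have "KS n k \<inter> {S. j \<in> S \<and> l \<in> S} = {S. S \<subseteq> {..<n} \<and> card S = k \<and> j \<in> S \<and> l \<in> S}"
    unfolding KS_def by auto
  also have "card \<dots> = (if k < 2 then 0 else n - 2 choose (k - 2))"
    using count2[of "{..<n}" j l k] assms by simp
  also have "real (if k < 2 then 0 else n - 2 choose (k - 2)) / real (n choose k)
           = real k * (real k - 1) / (real n * (real n - 1))"
  proof (cases "k < 2")
    case True
    then have "k = 0 \<or> k = 1" by auto
    then show ?thesis by auto
  next
    case False
    have n2: "n \<ge> 2" using assms False by simp
    have e1: "k * (n choose k) = n * (n - 1 choose (k - 1))"
      using times_binomial_minus1_eq False by simp
    have e2: "(k - 1) * (n - 1 choose (k - 1)) = (n - 1) * (n - 2 choose (k - 2))"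
      using times_binomial_minus1_eq[of "k - 1" "n - 1"] False by (simp add: diff_diff_add numeral_2_eq_2)
    have r1: "real k * real (n choose k) = real n * real (n - 1 choose (k - 1))"
      using e1 by (simp flip: of_nat_mult)
    have r2: "(real k - 1) * real (n - 1 choose (k - 1)) = (real n - 1) * real (n - 2 choose (k - 2))"
    proof -
      have "real ((k - 1) * (n - 1 choose (k - 1))) = real ((n - 1) * (n - 2 choose (k - 2)))"
        using e2 by simp
      moreover have "real (k - 1) = real k - 1" "real (n - 1) = real n - 1" using False n2 by auto
      ultimately show ?thesis by (simp only: of_nat_mult)
    qed
    have "real k * (real k - 1) * real (n choose k) = (real k - 1) * (real k * real (n choose k))" by simp
    also have "\<dots> = real n * ((real k - 1) * real (n - 1 choose (k - 1)))" using r1 by simp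
    also have "\<dots> = real n * (real n - 1) * real (n - 2 choose (k - 2))" using r2 by simp
    finally have "real k * (real k - 1) * real (n choose k) = real n * (real n - 1) * real (n - 2 choose (k - 2))" .
    moreover have "(n choose k) > 0" using assms by simp
    moreover have "real n * (real n - 1) > 0" using n2 by simp
    ultimately show ?thesis using False by (simp add: field_simps)
  qed
  finally show ?thesis .
qed


definition pp :: "nat \<Rightarrow> (nat \<Rightarrow> nat) \<Rightarrow> nat set \<Rightarrow> real" where
  "pp n a A = (\<Prod>i\<in>A. real (a i) / real n)"
definition qq :: "nat \<Rightarrow> (nat \<Rightarrow> nat) \<Rightarrow> nat set \<Rightarrow> real" where
  "qq n a A = (\<Prod>i\<in>A. real (a i) * (real (a i) - 1) / (real n * (real n - 1)))"
definition VV :: "nat \<Rightarrow> (nat \<Rightarrow> nat) \<Rightarrow> nat set \<Rightarrow> real" where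
  "VV n a A = real n * pp n a A + real n * (real n - 1) * qq n a A - (real n)^2 * (pp n a A)^2"

lemma of_bool_ball_prod: "finite I \<Longrightarrow> (of_bool (\<forall>i\<in>I. P i) :: real) = (\<Prod>i\<in>I. of_bool (P i))"
  by (induction I rule: finite_induct) auto

lemma sum_if_eq:
  assumes "j < n"
  shows "(\<Sum>k<n. if j = k then x else y) = x + (real n - 1) * (y::real)"
proof -
  have "(\<Sum>k<n. if j = k then x else y) = (\<Sum>k\<in>insert j ({..<n} - {j}). if j = k then x else y)"
    using assms by (intro sum.cong) auto
  also have "\<dots> = x + (\<Sum>k\<in>{..<n} - {j}. y)"
    by (subst sum.insert) (auto intro!: sum.cong)
  also have "\<dots> = x + (real n - 1) * y" using assms by (simp add: of_nat_diff)
  finally show ?thesis .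
qed

lemma var_formula:
  assumes m1: "m \<ge> 1" and n2: "n \<ge> 2" and an: "\<forall>i\<in>{1..m}. a i \<le> n"
  shows "coupon_var n m a = VV n a {1..m}"
proof -
  define D where "D = (\<lambda>i. pmf_of_set (KS n (a i)))"
  define M where "M = coupon_pmf n m a"
  have M: "M = Pi_pmf {1..m} {} D"
    unfolding M_def coupon_pmf_def D_def KS_def by simp
  have setD: "set_pmf (D i) = KS n (a i)" if "i \<in> {1..m}" for i
    unfolding D_def using KS_finite KS_nonempty an that by simp
  have setM: "set_pmf M = PiE_dflt {1..m} {} (\<lambda>i. KS n (a i))"
    unfolding M by (subst set_Pi_pmf) (auto simp: setD PiE_dflt_def)
  have finM: "finite (set_pmf M)" unfolding setM
    by (intro finite_PiE_dflt) (auto simp: KS_finite)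
  have int: "integrable M f" for f :: "_ \<Rightarrow> real"
    by (rule integrable_measure_pmf_finite[OF finM])
  have intD: "integrable (measure_pmf (D i)) f" if "i \<in> {1..m}" for i and f :: "_ \<Rightarrow> real"
    by (rule integrable_measure_pmf_finite) (use setD[OF that] KS_finite in simp)
  define g where "g = (\<lambda>j (S::nat \<Rightarrow> nat set). \<Prod>i\<in>{1..m}. (of_bool (j \<in> S i) :: real))"
  have Xeq: "X_all m S = (\<Sum>j<n. g j S)" if "S \<in> set_pmf M" for S
  proof -
    have "S 1 \<in> KS n (a 1)" using that m1 unfolding setM PiE_dflt_def by auto
    hence sub: "(\<Inter>i\<in>{1..m}. S i) \<subseteq> {..<n}" using m1 unfolding KS_def by auto
    have "X_all m S = real (card ({..<n} \<inter> {j. \<forall>i\<in>{1..m}. j \<in> S i}))"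
      unfolding X_all_def using sub by (intro arg_cong[where f="\<lambda>x. real (card x)"]) auto
    also have "\<dots> = (\<Sum>j<n. of_bool (\<forall>i\<in>{1..m}. j \<in> S i))" by simp
    also have "\<dots> = (\<Sum>j<n. g j S)" unfolding g_def by (intro sum.cong refl of_bool_ball_prod) auto
    finally show ?thesis .
  qed
  have Eg: "measure_pmf.expectation M (g j) = pp n a {1..m}" if "j < n" for j
  proof -
    have "measure_pmf.expectation M (g j) = (\<Prod>i\<in>{1..m}. measure_pmf.expectation (D i) (\<lambda>S. of_bool (j \<in> S)))"
      unfolding g_def M by (rule expectation_prod_Pi_pmf) (auto intro: intD)
    also have "\<dots> = pp n a {1..m}" unfolding pp_def D_def
      by (intro prod.cong refl exp1) (use an that in auto)
    finally show ?thesis .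
  qed
  have Egg: "measure_pmf.expectation M (\<lambda>S. g j S * g k S) = (if j = k then pp n a {1..m} else qq n a {1..m})"
    if "j < n" "k < n" for j k
  proof -
    have "measure_pmf.expectation M (\<lambda>S. g j S * g k S)
        = measure_pmf.expectation M (\<lambda>S. \<Prod>i\<in>{1..m}. of_bool (j \<in> S i \<and> k \<in> S i))"
      unfolding g_def by (intro Bochner_Integration.integral_cong refl) (simp add: prod.distrib[symmetric] of_bool_conj)
    also have "\<dots> = (\<Prod>i\<in>{1..m}. measure_pmf.expectation (D i) (\<lambda>S. of_bool (j \<in> S \<and> k \<in> S)))"
      unfolding M by (rule expectation_prod_Pi_pmf) (auto intro: intD)
    also have "\<dots> = (if j = k then pp n a {1..m} else qq n a {1..m})"
    proof (cases "j = k")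
      case True
      then show ?thesis unfolding pp_def D_def
        by (simp, intro prod.cong refl exp1) (use an that in auto)
    next
      case False
      then show ?thesis unfolding qq_def D_def
        by (simp, intro prod.cong refl exp2) (use an that in auto)
    qed
    finally show ?thesis .
  qed
  have EX: "measure_pmf.expectation M (X_all m) = real n * pp n a {1..m}"
  proof -
    have "measure_pmf.expectation M (X_all m) = measure_pmf.expectation M (\<lambda>S. \<Sum>j<n. g j S)"
      by (intro integral_cong_AE) (auto simp: AE_measure_pmf_iff Xeq)
    also have "\<dots> = (\<Sum>j<n. measure_pmf.expectation M (g j))"
      by (rule Bochner_Integration.integral_sum) (auto intro: int)
    also have "\<dots> = real n * pp n a {1..m}" by (simp add: Eg)
    finally show ?thesis .
  qed
  have EX2: "measure_pmf.expectation M (\<lambda>S. (X_all m S)^2)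
      = real n * pp n a {1..m} + real n * (real n - 1) * qq n a {1..m}"
  proof -
    have "measure_pmf.expectation M (\<lambda>S. (X_all m S)^2)
        = measure_pmf.expectation M (\<lambda>S. \<Sum>j<n. \<Sum>k<n. g j S * g k S)"
      by (intro integral_cong_AE) (auto simp: AE_measure_pmf_iff Xeq power2_eq_square sum_product)
    also have "\<dots> = (\<Sum>j<n. \<Sum>k<n. measure_pmf.expectation M (\<lambda>S. g j S * g k S))"
      by (simp add: Bochner_Integration.integral_sum int)
    also have "\<dots> = (\<Sum>j<n. \<Sum>k<n. if j = k then pp n a {1..m} else qq n a {1..m})"
      by (intro sum.cong refl) (simp add: Egg)
    also have "\<dots> = (\<Sum>j<n. pp n a {1..m} + (real n - 1) * qq n a {1..m})"
      by (intro sum.cong refl sum_if_eq) auto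
    also have "\<dots> = real n * pp n a {1..m} + real n * (real n - 1) * qq n a {1..m}"
      by (simp add: algebra_simps)
    finally show ?thesis .
  qed
  have "coupon_var n m a = measure_pmf.variance M (X_all m)" unfolding coupon_var_def M_def ..
  also have "\<dots> = measure_pmf.expectation M (\<lambda>S. (X_all m S)^2) - (measure_pmf.expectation M (X_all m))^2"
    by (rule measure_pmf.variance_eq) (auto intro: int)
  also have "\<dots> = VV n a {1..m}" unfolding EX EX2 VV_def by (simp add: power_mult_distrib)
  finally show ?thesis .
qed


lemma pp_bounds:
  assumes "\<forall>i\<in>A. a i \<le> n"
  shows "0 \<le> pp n a A" "pp n a A \<le> 1"
  unfolding pp_def using assms
  by (auto intro!: prod_nonneg prod_le_1 simp: divide_le_eq_1)

lemma qfac_nonneg: "n \<ge> 2 \<Longrightarrow> 0 \<le> real c * (real c - 1) / (real n * (real n - 1))"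
proof -
  assume n: "n \<ge> 2"
  have "0 \<le> real c * (real c - 1)" by (cases c) auto
  moreover have "0 < real n * (real n - 1)" using n by simp
  ultimately show ?thesis by simp
qed

lemma qq_nonneg: "n \<ge> 2 \<Longrightarrow> 0 \<le> qq n a A"
  unfolding qq_def by (intro prod_nonneg qfac_nonneg) auto

lemma alg:
  fixes x y c P Q :: real
  assumes "y > 0" "x = y + 1"
  shows "x*(c/x*P) + x*y*(c*(c-1)/(x*y)*Q) - x^2*(c/x*P)^2
   = x^2/y*(c/x)*(1-c/x)*P*(1-P) + c*(c-1)/(x*y)*(x*P + x*y*Q - x^2*P^2)"
proof -
  have x: "x > 0" using assms by auto
  have L: "x*(c/x*P) + x*y*(c*(c-1)/(x*y)*Q) - x^2*(c/x*P)^2 = c*P + c*(c-1)*Q - c^2*P^2"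
    using x assms(1) by (simp add: field_simps power2_eq_square)
  have R: "x^2/y*(c/x)*(1-c/x)*P*(1-P) + c*(c-1)/(x*y)*(x*P + x*y*Q - x^2*P^2)
     = (c*(x-c)*P*(1-P) + c*(c-1)*(P - x*P^2)) / y + c*(c-1)*Q"
    using x assms(1) by (simp add: field_simps power2_eq_square)
  have "c*(x-c)*P*(1-P) + c*(c-1)*(P - x*P^2) = y * (c*P - c^2*P^2)"
    using assms by (simp add: algebra_simps power2_eq_square)
  then show ?thesis unfolding L R using assms(1) by (simp add: field_simps)
qed

lemma VV_remove:
  assumes "finite A" "k \<in> A" "n \<ge> 2"
  shows "VV n a A = real n ^ 2 / (real n - 1) * (real (a k) / real n) * (1 - real (a k) / real n)
            * pp n a (A - {k}) * (1 - pp n a (A - {k}))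
          + real (a k) * (real (a k) - 1) / (real n * (real n - 1)) * VV n a (A - {k})"
proof -
  have P: "pp n a A = real (a k) / real n * pp n a (A - {k})"
    unfolding pp_def using assms by (simp add: prod.remove)
  have Q: "qq n a A = real (a k) * (real (a k) - 1) / (real n * (real n - 1)) * qq n a (A - {k})"
    unfolding qq_def using assms by (simp add: prod.remove)
  have "real n - 1 > 0" using assms by simp
  then show ?thesis unfolding VV_def P Q
    using alg[of "real n - 1" "real n" "real (a k)" "pp n a (A - {k})" "qq n a (A - {k})"] by simp
qed

lemma VV_nonneg:
  assumes "finite A" "n \<ge> 2" "\<forall>i\<in>A. a i \<le> n"
  shows "0 \<le> VV n a A"
  using assms
proof (induction A rule: finite_induct)
  case empty
  then show ?case by (simp add: VV_def pp_def qq_def power2_eq_square algebra_simps)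
next
  case (insert x F)
  have ins: "insert x F - {x} = F" using insert by auto
  have p: "0 \<le> real (a x) / real n" "real (a x) / real n \<le> 1" using insert by auto
  have q: "0 \<le> real (a x) * (real (a x) - 1) / (real n * (real n - 1))"
    using insert by (intro qfac_nonneg) auto
  have P: "0 \<le> pp n a F" "pp n a F \<le> 1" using pp_bounds[of F a n] insert by auto
  have IH: "0 \<le> VV n a F" using insert by auto
  have t2: "0 \<le> real (a x) * (real (a x) - 1) / (real n * (real n - 1)) * VV n a F"
    using q IH by (rule mult_nonneg_nonneg)
  have t1: "0 \<le> real n ^ 2 / (real n - 1) * (real (a x) / real n) * (1 - real (a x) / real n)
            * pp n a F * (1 - pp n a F)"
    using p P insert by (intro mult_nonneg_nonneg) auto
  show ?case using insert t1 t2
    by (subst VV_remove[of _ x]) (auto simp: ins)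
qed

lemma VV_lower:
  assumes "finite A" "k \<in> A" "n \<ge> 2" "\<forall>i\<in>A. a i \<le> n"
  shows "real n * (real (a k) / real n) * (1 - real (a k) / real n)
            * pp n a (A - {k}) * (1 - pp n a (A - {k})) \<le> VV n a A"
proof -
  let ?p = "real (a k) / real n" and ?P = "pp n a (A - {k})"
  have p: "0 \<le> ?p" "?p \<le> 1" using assms by auto
  have q: "0 \<le> real (a k) * (real (a k) - 1) / (real n * (real n - 1))"
    using assms by (intro qfac_nonneg) auto
  have P: "0 \<le> ?P" "?P \<le> 1" using pp_bounds[of "A - {k}" a n] assms by auto
  have V: "0 \<le> VV n a (A - {k})" using VV_nonneg assms by auto
  have X: "0 \<le> ?p * (1 - ?p) * ?P * (1 - ?P)" using p P by auto
  have "real n \<le> real n ^ 2 / (real n - 1)"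
    using assms by (simp add: field_simps power2_eq_square)
  hence "real n * (?p * (1 - ?p) * ?P * (1 - ?P)) \<le> real n ^ 2 / (real n - 1) * (?p * (1 - ?p) * ?P * (1 - ?P))"
    using X by (rule mult_right_mono)
  also have "\<dots> \<le> VV n a A"
  proof -
    have "0 \<le> real (a k) * (real (a k) - 1) / (real n * (real n - 1)) * VV n a (A - {k})"
      using q V by (rule mult_nonneg_nonneg)
    then show ?thesis using assms by (subst VV_remove[of _ k]) (auto simp: mult.assoc)
  qed
  finally show ?thesis by (simp only: mult.assoc)
qed

lemma t1: "((\<lambda>n. 1 - 1 / real n powr (2/3)) \<longlongrightarrow> 1) sequentially" by real_asymp
lemma t2: "((\<lambda>n. real n powr (2/3) / real n) \<longlongrightarrow> 0) sequentially" by real_asymp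
lemma t3: "((\<lambda>n. real n / (real n - 1)) \<longlongrightarrow> 1) sequentially" by real_asymp
lemma t4: "filterlim (\<lambda>n. real n powr (1/3)) at_top sequentially" by real_asymp
lemma alg2:
  fixes x y c :: real
  assumes "y > 0" "x = y + 1"
  shows "x*(c/x)^2 + x*y*(c*(c-1)/(x*y))^2 - x^2*((c/x)^2)^2 = c^2*(x-c)^2/(x^2*y)"
proof -
  have x: "x > 0" using assms by auto
  have "x*(c/x)^2 + x*y*(c*(c-1)/(x*y))^2 - x^2*((c/x)^2)^2 = (c^2*x*y + c^2*(c-1)^2*x - c^2*c^2*y)/(x^2*y)"
    using x assms(1) by (simp add: field_simps power2_eq_square)
  also have "c^2*x*y + c^2*(c-1)^2*x - c^2*c^2*y = c^2*(x-c)^2"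
    using assms(2) by (simp add: algebra_simps power2_eq_square power4_eq_xxxx)
  finally show ?thesis .
qed
lemma alg3:
  fixes x y c t :: real
  assumes "t > 0" "y > 0" "x = y + 1" "t^3 = x"
  shows "c^2*(x-c)^2/(x^2*y)/t = (c/t^2)^2*(1 - c/t^2*(t^2/x))^2*(x/y)"
proof -
  have x: "x > 0" using assms by auto
  have "(c/t^2)^2*(1 - c/t^2*(t^2/x))^2*(x/y) = c^2*(x-c)^2/(t^4*x*y)"
    using x assms(1,2) by (simp add: field_simps power2_eq_square power4_eq_xxxx)
  also have "t^4 = t * x" using assms(4) by (simp add: power4_eq_xxxx power3_eq_cube algebra_simps)
  finally show ?thesis using x assms(1,2) by (simp add: field_simps power2_eq_square)
qed

lemma floor_bounds:
  assumes "x \<ge> 0"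
  shows "real (nat \<lfloor>x\<rfloor>) \<le> x" "x - 1 \<le> real (nat \<lfloor>x\<rfloor>)"
proof -
  have "real (nat \<lfloor>x\<rfloor>) = of_int \<lfloor>x\<rfloor>" using assms by simp
  then show "real (nat \<lfloor>x\<rfloor>) \<le> x" "x - 1 \<le> real (nat \<lfloor>x\<rfloor>)"
    by simp_all
qed

lemma part2:
  shows "(\<lambda>n. coupon_var n 2 (\<lambda>i. nat \<lfloor>real n powr (2/3)\<rfloor>)) \<sim>[sequentially] (\<lambda>n. real n powr (1/3))"
    and "filterlim (\<lambda>n. coupon_var n 2 (\<lambda>i. nat \<lfloor>real n powr (2/3)\<rfloor>)) at_top sequentially"
proof -
  define b where "b = (\<lambda>n::nat. nat \<lfloor>real n powr (2/3)\<rfloor>)"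
  define u where "u = (\<lambda>n::nat. real (b n) / real n powr (2/3))"
  define r where "r = (\<lambda>n::nat. u n ^ 2 * (1 - u n * (real n powr (2/3) / real n))^2 * (real n / (real n - 1)))"
  have bb: "real (b n) \<le> real n powr (2/3)" "real n powr (2/3) - 1 \<le> real (b n)" for n
    unfolding b_def by (rule floor_bounds, simp)+
  have bn: "b n \<le> n" if "n \<ge> 1" for n
  proof -
    have "real n powr (2/3) \<le> real n powr 1" using that by (intro powr_mono) auto
    then have "real (b n) \<le> real n" using bb[of n] that by simp
    then show ?thesis by simp
  qed
  have cv: "coupon_var n 2 (\<lambda>i. b n) = real (b n)^2 * (real n - real (b n))^2 / (real n ^ 2 * (real n - 1))"
    if n: "n \<ge> 2" for n
  proof -
    have "coupon_var n 2 (\<lambda>i. b n) = VV n (\<lambda>i. b n) {1..2}"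
      by (rule var_formula) (use n bn in auto)
    also have "\<dots> = real n * (real (b n) / real n)^2
        + real n * (real n - 1) * (real (b n) * (real (b n) - 1) / (real n * (real n - 1)))^2
        - real n ^ 2 * ((real (b n) / real n)^2)^2"
      unfolding VV_def pp_def qq_def by simp
    also have "\<dots> = real (b n)^2 * (real n - real (b n))^2 / (real n ^ 2 * (real n - 1))"
      by (rule alg2) (use n in auto)
    finally show ?thesis .
  qed
  have ratio: "coupon_var n 2 (\<lambda>i. b n) / real n powr (1/3) = r n" if n: "n \<ge> 2" for n
  proof -
    define t where "t = real n powr (1/3)"
    have t: "t > 0" using n unfolding t_def by simp
    have t2: "real n powr (2/3) = t^2" unfolding t_def using n
      by (simp add: powr_realpow[symmetric] powr_powr)
    have t3: "t^3 = real n" unfolding t_def using n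
      by (simp add: powr_realpow[symmetric] powr_powr)
    show ?thesis unfolding cv[OF n] r_def u_def t2 t_def[symmetric]
      by (rule alg3) (use n t t3 in auto)
  qed
  have u1: "u \<longlonglongrightarrow> 1"
  proof (rule tendsto_sandwich[OF _ _ t1 tendsto_const])
    show "\<forall>\<^sub>F n in sequentially. 1 - 1 / real n powr (2 / 3) \<le> u n"
      using eventually_ge_at_top[of 1]
    proof eventually_elim
      case (elim n)
      have x: "real n powr (2/3) > 0" using elim by simp
      have "(real n powr (2/3) - 1) / real n powr (2/3) \<le> u n"
        unfolding u_def using x bb[of n] by (intro divide_right_mono) auto
      moreover have "(real n powr (2/3) - 1) / real n powr (2/3) = 1 - 1 / real n powr (2/3)"
        using x by (simp add: field_simps)
      ultimately show ?case by simp
    qed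
    show "\<forall>\<^sub>F n in sequentially. u n \<le> 1"
      using eventually_ge_at_top[of 1]
    proof eventually_elim
      case (elim n)
      have x: "real n powr (2/3) > 0" using elim by simp
      show ?case unfolding u_def using x bb[of n] by simp
    qed
  qed
  have r1: "r \<longlonglongrightarrow> 1"
  proof -
    have "r \<longlonglongrightarrow> 1 ^ 2 * (1 - 1 * 0)^2 * 1"
      unfolding r_def by (intro tendsto_intros u1 t2 t3)
    then show ?thesis by simp
  qed
  have ev: "\<forall>\<^sub>F n in sequentially. coupon_var n 2 (\<lambda>i. b n) / real n powr (1/3) = r n"
    using eventually_ge_at_top[of 2] by eventually_elim (rule ratio)
  have "((\<lambda>n. coupon_var n 2 (\<lambda>i. b n) / real n powr (1/3)) \<longlongrightarrow> 1) sequentially"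
    using r1 ev by (simp add: tendsto_cong)
  then show "(\<lambda>n. coupon_var n 2 (\<lambda>i. nat \<lfloor>real n powr (2/3)\<rfloor>)) \<sim>[sequentially] (\<lambda>n. real n powr (1/3))"
    unfolding b_def by (rule asymp_equivI')
  have lim: "filterlim (\<lambda>n. r n * real n powr (1/3)) at_top sequentially"
    by (rule filterlim_tendsto_pos_mult_at_top[OF r1 _ t4]) simp
  have ev2: "\<forall>\<^sub>F n in sequentially. r n * real n powr (1/3) = coupon_var n 2 (\<lambda>i. b n)"
    using eventually_ge_at_top[of 2]
  proof eventually_elim
    case (elim n)
    have "real n powr (1/3) > 0" using elim by simp
    then show ?case using ratio[OF elim] by (simp add: field_simps)
  qed
  show "filterlim (\<lambda>n. coupon_var n 2 (\<lambda>i. nat \<lfloor>real n powr (2/3)\<rfloor>)) at_top sequentially"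
    using filterlim_cong[OF refl refl ev2] lim by (simp add: b_def)
qed


lemma chain_mono:
  fixes f :: "nat \<Rightarrow> nat"
  assumes "\<forall>i\<in>{1..<m}. f i \<le> f (Suc i)" "1 \<le> i" "i \<le> j" "j \<le> m"
  shows "f i \<le> f j"
  using assms(3,4)
proof (induction j)
  case 0
  then show ?case using assms(2) by simp
next
  case (Suc j)
  show ?case
  proof (cases "i = Suc j")
    case False
    then have "i \<le> j" using Suc by simp
    then have "f i \<le> f j" using Suc by simp
    moreover have "f j \<le> f (Suc j)" using assms(1) \<open>i \<le> j\<close> assms(2) Suc by auto
    ultimately show ?thesis by simp
  qed simp
qed

lemma prod_lower_const:
  fixes f :: "nat \<Rightarrow> real"
  assumes "finite A" "\<forall>i\<in>A. c \<le> f i" "0 \<le> c"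
  shows "c ^ card A \<le> prod f A"
proof -
  have "prod (\<lambda>_. c) A \<le> prod f A" using assms by (intro prod_mono) auto
  then show ?thesis by simp
qed

lemma bound_mult:
  fixes c L1 L2 P :: real
  assumes "0 \<le> c" "0 \<le> L1" "L1 \<le> P" "0 \<le> L2" "L2 \<le> 1 - P"
  shows "c * L1 * L2 \<le> c * P * (1 - P)"
proof -
  have "L1 * L2 \<le> P * (1 - P)" using assms by (intro mult_mono) auto
  then have "c * (L1 * L2) \<le> c * (P * (1 - P))" using assms(1) by (rule mult_left_mono)
  then show ?thesis by (simp add: mult.assoc)
qed

lemma conv_not_at_top:
  fixes X :: "nat \<Rightarrow> real"
  assumes "convergent X" "filterlim X at_top sequentially"
  shows False
proof -
  obtain L where "X \<longlonglongrightarrow> L" using assms(1) unfolding convergent_def by blast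
  moreover have "filterlim X at_infinity sequentially"
    using assms(2) by (rule filterlim_at_top_imp_at_infinity)
  ultimately show False using not_tendsto_and_filterlim_at_infinity[of sequentially X L] by simp
qed

theorem corollary1:
  fixes m :: nat and a :: "nat \<Rightarrow> nat \<Rightarrow> nat" and \<alpha> :: "nat \<Rightarrow> real"
  assumes m2: "m \<ge> 2"
    and A2: "\<forall>i\<in>{1..m}. filterlim (\<lambda>n. a n i) at_top sequentially
                        \<and> filterlim (\<lambda>n. n - a n i) at_top sequentially"
    and A3: "eventually (\<lambda>n. 1 \<le> a n 1 \<and> (\<forall>i\<in>{1..<m}. a n i \<le> a n (Suc i))
                             \<and> a n m \<le> n - 1) sequentially"
    and A4: "\<forall>i\<in>{1..m}. (\<lambda>n. real (a n i) / real n) \<longlonglongrightarrow> \<alpha> i"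
  shows "(convergent (\<lambda>n. coupon_var n m (a n)) \<longrightarrow> \<alpha> 1 \<in> {0, 1} \<and> \<alpha> 2 \<in> {0, 1})
       \<and> ((\<lambda>n. coupon_var n 2 (\<lambda>i. nat \<lfloor>real n powr (2/3)\<rfloor>))
              \<sim>[sequentially] (\<lambda>n. real n powr (1/3)))
       \<and> filterlim (\<lambda>n. coupon_var n 2 (\<lambda>i. nat \<lfloor>real n powr (2/3)\<rfloor>)) at_top sequentially"
proof -
  define p where "p = (\<lambda>n i. real (a n i) / real n)"
  define V where "V = (\<lambda>n. coupon_var n m (a n))"
  have i1: "1 \<in> {1..m}" and i2: "2 \<in> {1..m}" using m2 by auto
  have lt: "\<forall>\<^sub>F n in sequentially. \<forall>i\<in>{1..m}. a n i < n"
  proof (rule eventually_ball_finite)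
    show "\<forall>i\<in>{1..m}. \<forall>\<^sub>F n in sequentially. a n i < n"
    proof
      fix i assume i: "i \<in> {1..m}"
      have "\<forall>\<^sub>F n in sequentially. 1 \<le> n - a n i"
        using A2 i unfolding filterlim_at_top by blast
      then show "\<forall>\<^sub>F n in sequentially. a n i < n" by eventually_elim auto
    qed
  qed simp
  define G where "G = (\<lambda>n. n \<ge> 2 \<and> (\<forall>i\<in>{1..m}. a n i \<le> n) \<and> (\<forall>i\<in>{1..<m}. a n i \<le> a n (Suc i)))"
  have EV: "\<forall>\<^sub>F n in sequentially. G n"
    using lt A3 eventually_ge_at_top[of 2] unfolding G_def
    by eventually_elim auto
  have mono: "a n i \<le> a n j" if "G n" "1 \<le> i" "i \<le> j" "j \<le> m" for n i j
    using chain_mono[of m "a n" i j] that unfolding G_def by auto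
  have VV_eq: "V n = VV n (a n) {1..m}" if "G n" for n
    unfolding V_def using that m2 unfolding G_def by (intro var_formula) auto
  have ppp: "pp n (a n) A = (\<Prod>i\<in>A. p n i)" for n A unfolding pp_def p_def ..
  have pb: "0 \<le> p n i" "p n i \<le> 1" if "G n" "i \<in> {1..m}" for n i
    using that unfolding G_def p_def by auto
  have pmono: "p n i \<le> p n j" if "G n" "1 \<le> i" "i \<le> j" "j \<le> m" for n i j
    unfolding p_def using mono[OF that] by (intro divide_right_mono) auto
  have ppb: "0 \<le> pp n (a n) A" "pp n (a n) A \<le> 1" if "G n" "A \<subseteq> {1..m}" for n A
    using pp_bounds[of A "a n" n] that unfolding G_def by auto
  have lower: "real n * p n k * (1 - p n k) * pp n (a n) ({1..m} - {k}) * (1 - pp n (a n) ({1..m} - {k})) \<le> V n"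
    if "G n" "k \<in> {1..m}" for n k
    unfolding VV_eq[OF that(1)] p_def
    by (rule VV_lower) (use that in \<open>auto simp: G_def\<close>)
  have alpha_bounds: "0 \<le> \<alpha> i \<and> \<alpha> i \<le> 1" if "i \<in> {1..m}" for i
  proof -
    have lim: "(\<lambda>n. p n i) \<longlonglongrightarrow> \<alpha> i" using A4 that unfolding p_def by auto
    have "\<forall>\<^sub>F n in sequentially. 0 \<le> p n i" using EV by eventually_elim (use pb that in auto)
    then have "0 \<le> \<alpha> i" using lim by (intro tendsto_lowerbound) auto
    moreover have "\<forall>\<^sub>F n in sequentially. p n i \<le> 1" using EV by eventually_elim (use pb that in auto)
    then have "\<alpha> i \<le> 1" using lim by (intro tendsto_upperbound) auto
    ultimately show ?thesis by simp
  qed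
  have lim1: "(\<lambda>n. p n 1) \<longlonglongrightarrow> \<alpha> 1" and lim2: "(\<lambda>n. p n 2) \<longlonglongrightarrow> \<alpha> 2"
    using A4 i1 i2 unfolding p_def by auto
  have caseA: "filterlim V at_top sequentially" if "0 < \<alpha> 1" "\<alpha> 1 < 1"
  proof -
    define B where "B = (\<lambda>n. (p n 1 ^ m * (1 - p n 1)) * real (n - a n 2))"
    have "(\<lambda>n. p n 1 ^ m * (1 - p n 1)) \<longlonglongrightarrow> \<alpha> 1 ^ m * (1 - \<alpha> 1)"
      by (intro tendsto_intros lim1)
    moreover have "\<alpha> 1 ^ m * (1 - \<alpha> 1) > 0" using that by simp
    moreover have "filterlim (\<lambda>n. real (n - a n 2)) at_top sequentially"
      using filterlim_compose[OF filterlim_real_sequentially] A2 i2 by blast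
    ultimately have "filterlim B at_top sequentially"
      unfolding B_def by (rule filterlim_tendsto_pos_mult_at_top)
    moreover have "\<forall>\<^sub>F n in sequentially. B n \<le> V n"
      using EV
    proof eventually_elim
      case (elim n)
      define P where "P = pp n (a n) ({1..m} - {1})"
      have n2: "n \<ge> 2" using elim unfolding G_def by auto
      have L1: "p n 1 ^ (m - 1) \<le> P"
      proof -
        have "p n 1 ^ card ({1..m} - {1}) \<le> P"
          unfolding P_def ppp
          by (rule prod_lower_const) (use pmono[OF elim] pb[OF elim i1] in auto)
        then show ?thesis using i1 by simp
      qed
      have U1: "P \<le> p n 2"
      proof -
        have "P = p n 2 * pp n (a n) ({1..m} - {1} - {2})"
          unfolding P_def ppp using i2 by (subst prod.remove[of _ 2]) auto
        also have "\<dots> \<le> p n 2 * 1"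
          using ppb[OF elim, of "{1..m} - {1} - {2}"] pb[OF elim i2] by (intro mult_left_mono) auto
        finally show ?thesis by simp
      qed
      have "real n * p n 1 * (1 - p n 1) * p n 1 ^ (m - 1) * (1 - p n 2)
          \<le> real n * p n 1 * (1 - p n 1) * P * (1 - P)"
        by (rule bound_mult) (use L1 U1 pb[OF elim i1] pb[OF elim i2] in auto)
      also have "\<dots> \<le> V n" unfolding P_def by (rule lower[OF elim i1])
      also have "real n * p n 1 * (1 - p n 1) * p n 1 ^ (m - 1) * (1 - p n 2) = B n"
      proof -
        have "a n 2 \<le> n" using elim i2 unfolding G_def by auto
        then have D: "real (n - a n 2) = real n * (1 - p n 2)"
          using n2 unfolding p_def by (simp add: of_nat_diff field_simps)
        have E: "p n 1 * p n 1 ^ (m - 1) = p n 1 ^ m"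
          using m2 by (simp add: power_eq_if[of _ m])
        have "real n * p n 1 * (1 - p n 1) * p n 1 ^ (m - 1) * (1 - p n 2)
            = (p n 1 * p n 1 ^ (m - 1)) * (1 - p n 1) * (real n * (1 - p n 2))"
          by (simp only: mult_ac)
        also have "\<dots> = B n" unfolding B_def E D ..
        finally show ?thesis .
      qed
      finally show ?case by simp
    qed
    ultimately show ?thesis by (rule filterlim_at_top_mono)
  qed
  have caseB: "filterlim V at_top sequentially" if "0 < \<alpha> 2" "\<alpha> 2 < 1"
  proof -
    define B where "B = (\<lambda>n. (p n 2 ^ (m - 1) * (1 - p n 2)^2) * real (a n 1))"
    have "(\<lambda>n. p n 2 ^ (m - 1) * (1 - p n 2)^2) \<longlonglongrightarrow> \<alpha> 2 ^ (m - 1) * (1 - \<alpha> 2)^2"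
      by (intro tendsto_intros lim2)
    moreover have "\<alpha> 2 ^ (m - 1) * (1 - \<alpha> 2)^2 > 0" using that by simp
    moreover have "filterlim (\<lambda>n. real (a n 1)) at_top sequentially"
      using filterlim_compose[OF filterlim_real_sequentially] A2 i1 by blast
    ultimately have "filterlim B at_top sequentially"
      unfolding B_def by (rule filterlim_tendsto_pos_mult_at_top)
    moreover have "\<forall>\<^sub>F n in sequentially. B n \<le> V n"
      using EV
    proof eventually_elim
      case (elim n)
      define P where "P = pp n (a n) ({1..m} - {2})"
      define R where "R = {1..m} - {2} - {1}"
      have n2: "n \<ge> 2" using elim unfolding G_def by auto
      have PR: "P = p n 1 * pp n (a n) R"
        unfolding P_def R_def ppp using i1 by (subst prod.remove[of _ 1]) auto
      have LR: "p n 2 ^ (m - 2) \<le> pp n (a n) R"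
      proof -
        have "p n 2 ^ card R \<le> pp n (a n) R"
          unfolding ppp R_def
          by (rule prod_lower_const) (use pmono[OF elim] pb[OF elim i2] in auto)
        moreover have "card R = m - 2" unfolding R_def using i1 i2 by (simp add: card_Diff_singleton)
        ultimately show ?thesis by simp
      qed
      have p12: "p n 1 \<le> p n 2" using pmono[OF elim] m2 by auto
      have L1: "p n 1 * p n 2 ^ (m - 2) \<le> P"
        unfolding PR using LR pb[OF elim i1] by (intro mult_left_mono) auto
      have U1: "P \<le> p n 1"
      proof -
        have "P \<le> p n 1 * 1" unfolding PR
          using ppb[OF elim, of R] pb[OF elim i1] unfolding R_def by (intro mult_left_mono) auto
        then show ?thesis by simp
      qed
      have "real n * p n 2 * (1 - p n 2) * (p n 1 * p n 2 ^ (m - 2)) * (1 - p n 2)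
          \<le> real n * p n 2 * (1 - p n 2) * P * (1 - P)"
        by (rule bound_mult) (use L1 U1 p12 pb[OF elim i1] pb[OF elim i2] in auto)
      also have "\<dots> \<le> V n" unfolding P_def by (rule lower[OF elim i2])
      also have "real n * p n 2 * (1 - p n 2) * (p n 1 * p n 2 ^ (m - 2)) * (1 - p n 2) = B n"
      proof -
        have D: "real n * p n 1 = real (a n 1)" using n2 unfolding p_def by simp
        have E: "p n 2 * p n 2 ^ (m - 2) = p n 2 ^ (m - 1)"
          using m2 by (metis Suc_diff_Suc Suc_1 diff_Suc_1 less_le_trans lessI power_Suc)
        have "real n * p n 2 * (1 - p n 2) * (p n 1 * p n 2 ^ (m - 2)) * (1 - p n 2)
            = (p n 2 * p n 2 ^ (m - 2)) * ((1 - p n 2) * (1 - p n 2)) * (real n * p n 1)"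
          by (simp only: mult_ac)
        also have "\<dots> = B n" unfolding B_def D E power2_eq_square ..
        finally show ?thesis .
      qed
      finally show ?case by simp
    qed
    ultimately show ?thesis by (rule filterlim_at_top_mono)
  qed
  have P1: "convergent V \<longrightarrow> \<alpha> 1 \<in> {0, 1} \<and> \<alpha> 2 \<in> {0, 1}"
  proof
    assume conv: "convergent V"
    have "\<alpha> 1 \<in> {0, 1}"
    proof (rule ccontr)
      assume "\<alpha> 1 \<notin> {0, 1}"
      then have "0 < \<alpha> 1" "\<alpha> 1 < 1" using alpha_bounds[OF i1] by auto
      then show False using caseA conv conv_not_at_top by blast
    qed
    moreover have "\<alpha> 2 \<in> {0, 1}"
    proof (rule ccontr)
      assume "\<alpha> 2 \<notin> {0, 1}"
      then have "0 < \<alpha> 2" "\<alpha> 2 < 1" using alpha_bounds[OF i2] by auto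
      then show False using caseB conv conv_not_at_top by blast
    qed
    ultimately show "\<alpha> 1 \<in> {0, 1} \<and> \<alpha> 2 \<in> {0, 1}" ..
  qed
  show ?thesis using P1 part2 unfolding V_def by blast
qed

end
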